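(* Let $u=[u_i]_{i\in[n]}$ ($n\in\{1,2,\dots\}\cup\{\infty\}$) be an invertible row operator on $\mathcal H$ with inverse $v=[v_i]_{i\in[n]}^t$, and let $\alpha$ be the endomorphism of $B(\mathcal H)$ given by $\alpha(x)=\sum_{i\in[n]}u_ixv_i$. Then for any $x,y\in B(\mathcal H)$: $\alpha(x)y=y\alpha(x)$ if and only if $x\,v_jyu_k=v_jyu_k\,x$ for all $j,k\in[n]$.
   Context: A row $u=[u_i]_{i\in[n]}\in B(\mathcal H\otimes\ell^2(n),\mathcal H)$ is invertible with inverse the column $v=[v_i]^t\in B(\mathcal H,\mathcal H\otimes\ell^2(n))$ if $vu=I_{\mathcal H\otimes\ell^2(n)}$ (equivalently $v_iu_j=\delta_{ij}I$) and $\sum_iu_iv_i=I_{\mathcal H}$ (strong operator topology). *)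

theory Defs
  imports "HOL-Analysis.Analysis"
begin

text \<open>A complex Hilbert space is modelled as a real Hilbert space ('a :: {real_inner, complete_space})
  together with a complex structure J (multiplication by i): an isometric real-linear operator with
  J o J = -I.  The complex bounded operators B(H) are then exactly the bounded real-linear operators
  commuting with J.\<close>

definition complex_structure :: "('a::real_normed_vector \<Rightarrow>\<^sub>L 'a) \<Rightarrow> bool" where
  "complex_structure J \<longleftrightarrow> J o\<^sub>L J = - id_blinfun \<and> (\<forall>h. norm (blinfun_apply J h) = norm h)"

definition is_BH :: "('a::real_normed_vector \<Rightarrow>\<^sub>L 'a) \<Rightarrow> ('a \<Rightarrow>\<^sub>L 'a) \<Rightarrow> bool" where
  "is_BH J T \<longleftrightarrow> T o\<^sub>L J = J o\<^sub>L T"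

definition idx :: "enat \<Rightarrow> nat set" where
  "idx n = {i. enat i < n}"

text \<open>Bounded row u = [u_i] : H \<otimes> l^2(I) \<rightarrow> H.\<close>
definition bounded_row :: "nat set \<Rightarrow> (nat \<Rightarrow> ('a::real_inner \<Rightarrow>\<^sub>L 'a)) \<Rightarrow> bool" where
  "bounded_row I u \<longleftrightarrow> (\<exists>C. \<forall>F \<xi>. finite F \<longrightarrow> F \<subseteq> I \<longrightarrow>
      norm (\<Sum>i\<in>F. blinfun_apply (u i) (\<xi> i)) \<le> C * sqrt (\<Sum>i\<in>F. (norm (\<xi> i))\<^sup>2))"

text \<open>Bounded column v = [v_i]^t : H \<rightarrow> H \<otimes> l^2(I).\<close>
definition bounded_column :: "nat set \<Rightarrow> (nat \<Rightarrow> ('a::real_inner \<Rightarrow>\<^sub>L 'a)) \<Rightarrow> bool" where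
  "bounded_column I v \<longleftrightarrow> (\<exists>C. \<forall>F h. finite F \<longrightarrow> F \<subseteq> I \<longrightarrow>
      (\<Sum>i\<in>F. (norm (blinfun_apply (v i) h))\<^sup>2) \<le> C * (norm h)\<^sup>2)"

definition invertible_row :: "nat set \<Rightarrow> (nat \<Rightarrow> ('a::{real_inner,complete_space} \<Rightarrow>\<^sub>L 'a))
    \<Rightarrow> (nat \<Rightarrow> ('a \<Rightarrow>\<^sub>L 'a)) \<Rightarrow> bool" where
  "invertible_row I u v \<longleftrightarrow> bounded_row I u \<and> bounded_column I v \<and>
     (\<forall>i\<in>I. \<forall>j\<in>I. v i o\<^sub>L u j = (if i = j then id_blinfun else 0)) \<and>
     (\<forall>h. ((\<lambda>i. blinfun_apply (u i) (blinfun_apply (v i) h)) has_sum h) I)"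

definition alpha :: "nat set \<Rightarrow> (nat \<Rightarrow> ('a::{real_inner,complete_space} \<Rightarrow>\<^sub>L 'a))
    \<Rightarrow> (nat \<Rightarrow> ('a \<Rightarrow>\<^sub>L 'a)) \<Rightarrow> ('a \<Rightarrow>\<^sub>L 'a) \<Rightarrow> ('a \<Rightarrow>\<^sub>L 'a)" where
  "alpha I u v x = Blinfun (\<lambda>h. infsum (\<lambda>i. blinfun_apply (u i) (blinfun_apply x (blinfun_apply (v i) h))) I)"

end

theory Submission imports Defs begin

lemma row_sum:
  fixes u :: "nat \<Rightarrow> ('a::{real_inner,complete_space} \<Rightarrow>\<^sub>L 'a)" and \<xi> :: "nat \<Rightarrow> 'a"
  assumes C: "\<And>F. finite F \<Longrightarrow> F \<subseteq> I \<Longrightarrow> norm (\<Sum>i\<in>F. blinfun_apply (u i) (\<xi> i)) \<le> C * sqrt (\<Sum>i\<in>F. (norm (\<xi> i))\<^sup>2)"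
    and C0: "C \<ge> 0"
    and g: "((\<lambda>i. (norm (\<xi> i))\<^sup>2) has_sum L) I"
  shows "\<exists>S. ((\<lambda>i. blinfun_apply (u i) (\<xi> i)) has_sum S) I \<and> norm S \<le> C * sqrt L"
proof -
  define f where "f i = blinfun_apply (u i) (\<xi> i)" for i
  define g where "g i = (norm (\<xi> i))\<^sup>2" for i
  have gnn: "g i \<ge> 0" for i by (simp add: g_def)
  have gs: "(g has_sum L) I" using g by (simp add: g_def[abs_def])
  have Cf: "norm (sum f F) \<le> C * sqrt (sum g F)" if "finite F" "F \<subseteq> I" for F
    using C[OF that] by (simp add: f_def g_def)
  have tail: "\<exists>F0. finite F0 \<and> F0 \<subseteq> I \<and> (\<forall>G. finite G \<longrightarrow> G \<subseteq> I \<longrightarrow> G \<inter> F0 = {} \<longrightarrow> sum g G < d)"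
    if d: "d > 0" for d
  proof -
    obtain F0 where F0: "finite F0" "F0 \<subseteq> I" "dist (sum g F0) L \<le> d/2"
      using has_sum_finite_approximation[OF gs, of "d/2"] d by auto
    have "sum g G < d" if G: "finite G" "G \<subseteq> I" "G \<inter> F0 = {}" for G
    proof -
      have "sum g (F0 \<union> G) \<le> L"
        by (rule finite_sum_le_has_sum[OF gs]) (use F0 G gnn in auto)
      moreover have "sum g (F0 \<union> G) = sum g F0 + sum g G"
        using F0 G by (subst sum.union_disjoint) auto
      ultimately show ?thesis using F0(3) d unfolding dist_real_def abs_le_iff by linarith
    qed
    then show ?thesis using F0 by blast
  qed
  have small: "norm (sum f G) < e/4" if "e > 0" "finite G" "G \<subseteq> I" "sum g G < (e/(4*(C+1)))\<^sup>2" for G e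
  proof -
    have "norm (sum f G) \<le> C * sqrt (sum g G)" using Cf that by auto
    also have "\<dots> \<le> (C+1) * sqrt (sum g G)" using gnn by (simp add: distrib_right sum_nonneg)
    also have "\<dots> < (C+1) * sqrt ((e/(4*(C+1)))\<^sup>2)"
      using that C0 by (intro mult_strict_left_mono real_sqrt_less_mono) auto
    also have "\<dots> = (C+1) * (e/(4*(C+1)))" using that C0 by simp
    also have "\<dots> = e/4" using C0 by (simp add: field_simps)
    finally show ?thesis .
  qed
  have "\<exists>P. eventually P (finite_subsets_at_top I) \<and> (\<forall>F F'. P F \<and> P F' \<longrightarrow> dist (sum f F) (sum f F') < e)"
    if e: "e > 0" for e
  proof -
    obtain F0 where F0: "finite F0" "F0 \<subseteq> I" "\<And>G. finite G \<Longrightarrow> G \<subseteq> I \<Longrightarrow> G \<inter> F0 = {} \<Longrightarrow> sum g G < (e/(4*(C+1)))\<^sup>2"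
      using tail[of "(e/(4*(C+1)))\<^sup>2"] e C0 by auto
    define P where "P F \<longleftrightarrow> finite F \<and> F \<subseteq> I \<and> F0 \<subseteq> F" for F
    have ev: "eventually P (finite_subsets_at_top I)"
      unfolding eventually_finite_subsets_at_top P_def using F0 by blast
    have "dist (sum f F) (sum f F') < e" if "P F" "P F'" for F F'
    proof -
      have fin: "finite F" "finite F'" "F \<subseteq> I" "F' \<subseteq> I" "F0 \<subseteq> F" "F0 \<subseteq> F'" using that by (auto simp: P_def)
      have eq: "sum f F - sum f F' = sum f (F - F') - sum f (F' - F)"
        using sum.Int_Diff[OF fin(1), of f F'] sum.Int_Diff[OF fin(2), of f F]
        by (simp add: Int_commute)
      have a: "norm (sum f (F - F')) < e/4"
        using fin e by (intro small F0) auto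
      have b: "norm (sum f (F' - F)) < e/4"
        using fin e by (intro small F0) auto
      have "dist (sum f F) (sum f F') = norm (sum f (F - F') - sum f (F' - F))"
        by (simp add: dist_norm eq)
      also have "\<dots> \<le> norm (sum f (F - F')) + norm (sum f (F' - F))" by (rule norm_triangle_ineq4)
      finally show ?thesis using a b e by linarith
    qed
    then show ?thesis using ev by blast
  qed
  then have "cauchy_filter (filtermap (sum f) (finite_subsets_at_top I))"
    by (simp add: cauchy_filter_metric_filtermap)
  moreover have "complete (UNIV::'a set)"
    by (meson Cauchy_convergent UNIV_I complete_def convergent_def)
  ultimately obtain S where S: "(sum f \<longlongrightarrow> S) (finite_subsets_at_top I)"
    using complete_uniform[where S=UNIV] by (force simp add: filterlim_def)
  have "norm S \<le> C * sqrt L"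
  proof (rule tendsto_upperbound[OF tendsto_norm[OF S]])
    show "\<forall>\<^sub>F F in finite_subsets_at_top I. norm (sum f F) \<le> C * sqrt L"
    proof (rule eventually_finite_subsets_at_top_weakI)
      fix F assume F: "finite F" "F \<subseteq> I"
      have "sum g F \<le> L" by (rule finite_sum_le_has_sum[OF gs F]) (use gnn in auto)
      then have "C * sqrt (sum g F) \<le> C * sqrt L" using C0 by (intro mult_left_mono) auto
      then show "norm (sum f F) \<le> C * sqrt L" using Cf[OF F] by linarith
    qed
  qed simp
  then show ?thesis using S unfolding has_sum_def f_def by blast
qed

lemma alpha_has_sum:
  fixes u v :: "nat \<Rightarrow> ('a::{real_inner,complete_space} \<Rightarrow>\<^sub>L 'a)"
  assumes inv: "invertible_row I u v"
  shows "((\<lambda>i. blinfun_apply (u i) (blinfun_apply x (blinfun_apply (v i) h))) has_sum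
           blinfun_apply (alpha I u v x) h) I"
proof -
  obtain C0 where C0: "\<forall>F \<xi>. finite F \<longrightarrow> F \<subseteq> I \<longrightarrow>
      norm (\<Sum>i\<in>F. blinfun_apply (u i) (\<xi> i)) \<le> C0 * sqrt (\<Sum>i\<in>F. (norm (\<xi> i))\<^sup>2)"
    using conjunct1[OF inv[unfolded invertible_row_def]] unfolding bounded_row_def by (elim exE) (rule that)
  obtain D0 where D0: "\<forall>F h. finite F \<longrightarrow> F \<subseteq> I \<longrightarrow>
      (\<Sum>i\<in>F. (norm (blinfun_apply (v i) h))\<^sup>2) \<le> D0 * (norm h)\<^sup>2"
    using conjunct1[OF conjunct2[OF inv[unfolded invertible_row_def]]] unfolding bounded_column_def by (elim exE) (rule that)
  define C where "C = max C0 0"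
  define D where "D = max D0 0"
  have Cnn: "C \<ge> 0" and Dnn: "D \<ge> 0" by (auto simp: C_def D_def)
  have Cb: "norm (\<Sum>i\<in>F. blinfun_apply (u i) (\<xi> i)) \<le> C * sqrt (\<Sum>i\<in>F. (norm (\<xi> i))\<^sup>2)"
    if "finite F" "F \<subseteq> I" for F \<xi>
  proof -
    have "C0 * sqrt (\<Sum>i\<in>F. (norm (\<xi> i))\<^sup>2) \<le> C * sqrt (\<Sum>i\<in>F. (norm (\<xi> i))\<^sup>2)"
      unfolding C_def by (intro mult_right_mono) (auto simp: sum_nonneg)
    then show ?thesis by (rule order.trans[OF C0[rule_format, OF that]])
  qed
  have Db: "(\<Sum>i\<in>F. (norm (blinfun_apply (v i) h))\<^sup>2) \<le> D * (norm h)\<^sup>2"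
    if "finite F" "F \<subseteq> I" for F h
  proof -
    have "D0 * (norm h)\<^sup>2 \<le> D * (norm h)\<^sup>2" unfolding D_def by (intro mult_right_mono) auto
    then show ?thesis by (rule order.trans[OF D0[rule_format, OF that]])
  qed
  define K where "K = C * norm x * sqrt D"
  have main: "\<exists>S. ((\<lambda>i. blinfun_apply (u i) (blinfun_apply x (blinfun_apply (v i) h))) has_sum S) I
      \<and> norm S \<le> K * norm h" for h
  proof -
    define g where "g i = (norm (blinfun_apply x (blinfun_apply (v i) h)))\<^sup>2" for i
    define B where "B = (norm x)\<^sup>2 * (D * (norm h)\<^sup>2)"
    have gF: "sum g F \<le> B" if "finite F" "F \<subseteq> I" for F
    proof -
      have "sum g F \<le> (\<Sum>i\<in>F. (norm x)\<^sup>2 * (norm (blinfun_apply (v i) h))\<^sup>2)"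
        unfolding g_def
      proof (rule sum_mono)
        fix i
        have "norm (blinfun_apply x (blinfun_apply (v i) h)) \<le> norm x * norm (blinfun_apply (v i) h)"
          by (rule norm_blinfun)
        then have "(norm (blinfun_apply x (blinfun_apply (v i) h)))\<^sup>2 \<le> (norm x * norm (blinfun_apply (v i) h))\<^sup>2"
          by (intro power_mono) auto
        then show "(norm (blinfun_apply x (blinfun_apply (v i) h)))\<^sup>2 \<le> (norm x)\<^sup>2 * (norm (blinfun_apply (v i) h))\<^sup>2"
          by (simp add: power_mult_distrib)
      qed
      also have "\<dots> = (norm x)\<^sup>2 * (\<Sum>i\<in>F. (norm (blinfun_apply (v i) h))\<^sup>2)"
        by (simp add: sum_distrib_left)
      also have "\<dots> \<le> B" unfolding B_def using Db[OF that, of h] by (intro mult_left_mono) auto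
      finally show ?thesis .
    qed
    have gs: "g summable_on I"
    proof (rule nonneg_bdd_above_summable_on)
      show "bdd_above (sum g ` {F. F \<subseteq> I \<and> finite F})"
        unfolding bdd_above_def using gF by blast
    qed (simp add: g_def)
    define L where "L = infsum g I"
    have gL: "(g has_sum L) I" using gs by (simp add: L_def)
    have LB: "L \<le> B" unfolding L_def by (rule infsum_le_finite_sums[OF gs gF])
    obtain S where S: "((\<lambda>i. blinfun_apply (u i) (blinfun_apply x (blinfun_apply (v i) h))) has_sum S) I"
      "norm S \<le> C * sqrt L"
      using row_sum[of I u "\<lambda>i. blinfun_apply x (blinfun_apply (v i) h)" C L, OF Cb Cnn gL[unfolded g_def[abs_def]]]
      by blast
    have "sqrt B = norm x * sqrt D * norm h"
      unfolding B_def by (simp add: real_sqrt_mult mult.assoc)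
    moreover have "sqrt L \<le> sqrt B" using LB by (rule real_sqrt_le_mono)
    moreover have "C * sqrt L \<le> C * sqrt B" using \<open>sqrt L \<le> sqrt B\<close> Cnn by (rule mult_left_mono)
    ultimately have "C * sqrt L \<le> K * norm h" unfolding K_def by (simp add: mult.assoc)
    then show ?thesis using S by (blast intro: order.trans)
  qed
  define f where "f h = infsum (\<lambda>i. blinfun_apply (u i) (blinfun_apply x (blinfun_apply (v i) h))) I" for h
  have fh: "((\<lambda>i. blinfun_apply (u i) (blinfun_apply x (blinfun_apply (v i) h))) has_sum f h) I" for h
  proof -
    obtain S where S: "((\<lambda>i. blinfun_apply (u i) (blinfun_apply x (blinfun_apply (v i) h))) has_sum S) I"
      using main[of h] by blast
    have "f h = S" unfolding f_def by (rule infsumI[OF S])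
    then show ?thesis using S by simp
  qed
  have "bounded_linear f"
  proof (rule bounded_linear_intro[where K=K])
    fix a b
    have "((\<lambda>i. blinfun_apply (u i) (blinfun_apply x (blinfun_apply (v i) (a + b)))) has_sum (f a + f b)) I"
      using has_sum_add[OF fh[of a] fh[of b]] by (simp add: blinfun.add_right)
    then show "f (a + b) = f a + f b" using fh[of "a+b"] has_sum_unique by blast
  next
    fix r a
    have "((\<lambda>i. blinfun_apply (u i) (blinfun_apply x (blinfun_apply (v i) (r *\<^sub>R a)))) has_sum (r *\<^sub>R f a)) I"
      using has_sum_scaleR[OF fh[of a], of r] by (simp add: blinfun.scaleR_right)
    then show "f (r *\<^sub>R a) = r *\<^sub>R f a" using fh[of "r *\<^sub>R a"] has_sum_unique by blast
  next
    fix a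
    obtain S where S: "((\<lambda>i. blinfun_apply (u i) (blinfun_apply x (blinfun_apply (v i) a))) has_sum S) I"
      "norm S \<le> K * norm a" using main by blast
    have "f a = S" using has_sum_unique[OF fh[of a] S(1)] .
    then show "norm (f a) \<le> norm a * K" using S(2) by (simp add: mult.commute)
  qed
  then have "blinfun_apply (alpha I u v x) = f"
    unfolding alpha_def f_def[abs_def] by (rule bounded_linear_Blinfun_apply)
  then show ?thesis using fh by simp
qed

lemma vu_apply:
  assumes vu: "\<forall>i\<in>I. \<forall>j\<in>I. v i o\<^sub>L u j = (if i = j then id_blinfun else 0)"
    and "i \<in> I" "k \<in> I"
  shows "blinfun_apply (v i) (blinfun_apply (u k) h) = (if i = k then h else 0)"
proof -
  have "blinfun_apply (v i) (blinfun_apply (u k) h) = blinfun_apply (v i o\<^sub>L u k) h" by simp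
  also have "\<dots> = (if i = k then h else 0)" using vu assms(2,3) by auto
  finally show ?thesis .
qed

lemma alpha_u:
  fixes u v :: "nat \<Rightarrow> ('a::{real_inner,complete_space} \<Rightarrow>\<^sub>L 'a)"
  assumes inv: "invertible_row I u v" and k: "k \<in> I"
  shows "blinfun_apply (alpha I u v x) (blinfun_apply (u k) h) = blinfun_apply (u k) (blinfun_apply x h)"
proof -
  have vu: "\<forall>i\<in>I. \<forall>j\<in>I. v i o\<^sub>L u j = (if i = j then id_blinfun else 0)"
    using inv by (simp add: invertible_row_def)
  have "((\<lambda>i. blinfun_apply (u i) (blinfun_apply x (blinfun_apply (v i) (blinfun_apply (u k) h)))) has_sum
      blinfun_apply (u k) (blinfun_apply x h)) I"
    by (rule has_sum_finite_neutralI[where B="{k}"]) (use k vu_apply[OF vu _ k] in auto)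
  then show ?thesis using alpha_has_sum[OF inv, of x "blinfun_apply (u k) h"] has_sum_unique by blast
qed

lemma v_alpha:
  fixes u v :: "nat \<Rightarrow> ('a::{real_inner,complete_space} \<Rightarrow>\<^sub>L 'a)"
  assumes inv: "invertible_row I u v" and j: "j \<in> I"
  shows "blinfun_apply (v j) (blinfun_apply (alpha I u v x) h) = blinfun_apply x (blinfun_apply (v j) h)"
proof -
  have vu: "\<forall>i\<in>I. \<forall>j\<in>I. v i o\<^sub>L u j = (if i = j then id_blinfun else 0)"
    using inv by (simp add: invertible_row_def)
  have "((\<lambda>i. blinfun_apply (v j) (blinfun_apply (u i) (blinfun_apply x (blinfun_apply (v i) h)))) has_sum
      blinfun_apply (v j) (blinfun_apply (alpha I u v x) h)) I"
    by (rule has_sum_bounded_linear[OF blinfun.bounded_linear_right alpha_has_sum[OF inv]])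
  moreover have "((\<lambda>i. blinfun_apply (v j) (blinfun_apply (u i) (blinfun_apply x (blinfun_apply (v i) h)))) has_sum
      blinfun_apply x (blinfun_apply (v j) h)) I"
    by (rule has_sum_finite_neutralI[where B="{j}"]) (use j vu_apply[OF vu j] in auto)
  ultimately show ?thesis using has_sum_unique by blast
qed

lemma recon:
  assumes inv: "invertible_row I u v"
    and eq: "\<And>j. j \<in> I \<Longrightarrow> blinfun_apply (v j) z = blinfun_apply (v j) w"
  shows "z = w"
proof -
  have hz: "((\<lambda>i. blinfun_apply (u i) (blinfun_apply (v i) z)) has_sum z) I"
    using inv by (simp add: invertible_row_def)
  have hw: "((\<lambda>i. blinfun_apply (u i) (blinfun_apply (v i) w)) has_sum w) I"
    using inv by (simp add: invertible_row_def)
  have "((\<lambda>i. blinfun_apply (u i) (blinfun_apply (v i) z)) has_sum w) I"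
    using hw by (subst has_sum_cong[where g="\<lambda>i. blinfun_apply (u i) (blinfun_apply (v i) w)"]) (auto simp: eq)
  then show ?thesis using hz has_sum_unique by blast
qed

theorem proposition3p6:
  fixes J :: "'a::{real_inner,complete_space} \<Rightarrow>\<^sub>L 'a"
    and n :: enat
    and u v :: "nat \<Rightarrow> ('a \<Rightarrow>\<^sub>L 'a)"
    and x y :: "'a \<Rightarrow>\<^sub>L 'a"
  assumes J: "complex_structure J"
    and n: "n \<ge> 1"
    and uB: "\<forall>i\<in>idx n. is_BH J (u i)"
    and vB: "\<forall>i\<in>idx n. is_BH J (v i)"
    and inv: "invertible_row (idx n) u v"
    and xB: "is_BH J x"
    and yB: "is_BH J y"
  shows "alpha (idx n) u v x o\<^sub>L y = y o\<^sub>L alpha (idx n) u v x \<longleftrightarrow>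
    (\<forall>j\<in>idx n. \<forall>k\<in>idx n.
       x o\<^sub>L (v j o\<^sub>L y o\<^sub>L u k) = (v j o\<^sub>L y o\<^sub>L u k) o\<^sub>L x)"
proof
  define A where "A = alpha (idx n) u v x"
  assume AY: "alpha (idx n) u v x o\<^sub>L y = y o\<^sub>L alpha (idx n) u v x"
  have AYz: "blinfun_apply A (blinfun_apply y z) = blinfun_apply y (blinfun_apply A z)" for z
    using arg_cong[OF AY, of "\<lambda>T. blinfun_apply T z"] by (simp add: A_def)
  show "\<forall>j\<in>idx n. \<forall>k\<in>idx n. x o\<^sub>L (v j o\<^sub>L y o\<^sub>L u k) = (v j o\<^sub>L y o\<^sub>L u k) o\<^sub>L x"
  proof (intro ballI blinfun_eqI)
    fix j k h assume j: "j \<in> idx n" and k: "k \<in> idx n"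
    have "blinfun_apply x (blinfun_apply (v j) (blinfun_apply y (blinfun_apply (u k) h)))
        = blinfun_apply (v j) (blinfun_apply A (blinfun_apply y (blinfun_apply (u k) h)))"
      unfolding A_def by (rule v_alpha[OF inv j, symmetric])
    also have "\<dots> = blinfun_apply (v j) (blinfun_apply y (blinfun_apply A (blinfun_apply (u k) h)))"
      by (simp add: AYz)
    also have "\<dots> = blinfun_apply (v j) (blinfun_apply y (blinfun_apply (u k) (blinfun_apply x h)))"
      unfolding A_def by (simp add: alpha_u[OF inv k])
    finally show "blinfun_apply (x o\<^sub>L (v j o\<^sub>L y o\<^sub>L u k)) h = blinfun_apply ((v j o\<^sub>L y o\<^sub>L u k) o\<^sub>L x) h"
      by simp
  qed
next
  define A where "A = alpha (idx n) u v x"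
  assume H: "\<forall>j\<in>idx n. \<forall>k\<in>idx n. x o\<^sub>L (v j o\<^sub>L y o\<^sub>L u k) = (v j o\<^sub>L y o\<^sub>L u k) o\<^sub>L x"
  have Hz: "blinfun_apply x (blinfun_apply (v j) (blinfun_apply y (blinfun_apply (u k) z)))
      = blinfun_apply (v j) (blinfun_apply y (blinfun_apply (u k) (blinfun_apply x z)))"
    if "j \<in> idx n" "k \<in> idx n" for j k z
    using arg_cong[OF H[rule_format, OF that], of "\<lambda>T. blinfun_apply T z"] by simp
  show "alpha (idx n) u v x o\<^sub>L y = y o\<^sub>L alpha (idx n) u v x"
  proof (rule blinfun_eqI)
    fix h
    have "blinfun_apply A (blinfun_apply y h) = blinfun_apply y (blinfun_apply A h)"
    proof (rule recon[OF inv])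
      fix j assume j: "j \<in> idx n"
      have rh: "((\<lambda>k. blinfun_apply (u k) (blinfun_apply (v k) h)) has_sum h) (idx n)"
        using inv by (simp add: invertible_row_def)
      have s1: "((\<lambda>k. blinfun_apply x (blinfun_apply (v j) (blinfun_apply y (blinfun_apply (u k) (blinfun_apply (v k) h)))))
          has_sum blinfun_apply x (blinfun_apply (v j) (blinfun_apply y h))) (idx n)"
        by (intro has_sum_bounded_linear[OF blinfun.bounded_linear_right] rh)
      have s2: "((\<lambda>k. blinfun_apply (v j) (blinfun_apply y (blinfun_apply (u k) (blinfun_apply x (blinfun_apply (v k) h)))))
          has_sum blinfun_apply (v j) (blinfun_apply y (blinfun_apply A h))) (idx n)"
        unfolding A_def by (intro has_sum_bounded_linear[OF blinfun.bounded_linear_right] alpha_has_sum[OF inv])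
      have s1': "((\<lambda>k. blinfun_apply (v j) (blinfun_apply y (blinfun_apply (u k) (blinfun_apply x (blinfun_apply (v k) h)))))
          has_sum blinfun_apply x (blinfun_apply (v j) (blinfun_apply y h))) (idx n)"
        using s1 by (subst (asm) has_sum_cong) (auto simp: Hz[OF j])
      have "blinfun_apply x (blinfun_apply (v j) (blinfun_apply y h)) = blinfun_apply (v j) (blinfun_apply y (blinfun_apply A h))"
        using has_sum_unique[OF s1' s2] .
      then show "blinfun_apply (v j) (blinfun_apply A (blinfun_apply y h)) = blinfun_apply (v j) (blinfun_apply y (blinfun_apply A h))"
        unfolding A_def by (simp add: v_alpha[OF inv j])
    qed
    then show "blinfun_apply (alpha (idx n) u v x o\<^sub>L y) h = blinfun_apply (y o\<^sub>L alpha (idx n) u v x) h"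
      by (simp add: A_def)
  qed
qed

end
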